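(* For every $n$ there is an OBDD $D_n$ on $O(n)$ variables of weak width at most $3$ and a subset $Z$ of its variables such that the function $\neg\exists Z\,D_n$ has no OBDD of size $2^{o(n)}$.
   Context: A binary decision diagram (BDD) is a directed acyclic graph with one source and two sinks labeled $0$ and $1$; every non-sink node is labeled by a Boolean variable and has two outgoing edges labeled $0$ and $1$. On an assignment one follows, from the source, at each node labeled $X$ the edge labeled by the value of $X$; the label of the reached sink is the output. An OBDD is a BDD in which on every source–sink path the variables appear at most once and in a fixed order. The weak width of an OBDD (not necessarily complete) is the maximum, over variables $x$, of the number of nodes labeled by $x$. $\exists Z\,D$ is the function on the remaining variables true iff some extension to $Z$ satisfies $D$. *)

theory Defs
  imports Complex_Main "HOL-Library.Landau_Symbols"
begin

text \<open>A BDD: inner nodes are natural numbers (a finite set), sinks are Inr False / Inr True.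
  Each inner node v carries a variable label bvar v and successors bsucc v False / bsucc v True.\<close>

record bdd =
  bnodes :: "nat set"
  bsrc :: "nat + bool"
  bvar :: "nat \<Rightarrow> nat"
  bsucc :: "nat \<Rightarrow> bool \<Rightarrow> nat + bool"

definition valid_target :: "bdd \<Rightarrow> nat + bool \<Rightarrow> bool" where
  "valid_target D u \<longleftrightarrow> (case u of Inl v \<Rightarrow> v \<in> bnodes D | Inr b \<Rightarrow> True)"

text \<open>An OBDD: finite, edges stay inside the diagram, and there is a fixed variable order
  (injective rank rho) which strictly increases along every edge between inner nodes; hence
  the graph is acyclic and on every path variables occur at most once and in the fixed order.\<close>

definition is_obdd :: "bdd \<Rightarrow> bool" where
  "is_obdd D \<longleftrightarrow> finite (bnodes D) \<and> valid_target D (bsrc D) \<and>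
     (\<forall>v\<in>bnodes D. \<forall>c. valid_target D (bsucc D v c)) \<and>
     (\<exists>rho :: nat \<Rightarrow> nat. inj rho \<and>
        (\<forall>v\<in>bnodes D. \<forall>c w. bsucc D v c = Inl w \<longrightarrow> rho (bvar D v) < rho (bvar D w)))"

inductive reaches :: "bdd \<Rightarrow> (nat \<Rightarrow> bool) \<Rightarrow> nat + bool \<Rightarrow> bool \<Rightarrow> bool" where
  sink: "reaches D a (Inr b) b"
| step: "v \<in> bnodes D \<Longrightarrow> reaches D a (bsucc D v (a (bvar D v))) b \<Longrightarrow> reaches D a (Inl v) b"

definition computes :: "bdd \<Rightarrow> ((nat \<Rightarrow> bool) \<Rightarrow> bool) \<Rightarrow> bool" where
  "computes D f \<longleftrightarrow> (\<forall>a. reaches D a (bsrc D) (f a))"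

definition bdd_vars :: "bdd \<Rightarrow> nat set" where
  "bdd_vars D = bvar D ` bnodes D"

text \<open>Size: number of nodes, including the two sinks.\<close>
definition bdd_size :: "bdd \<Rightarrow> nat" where
  "bdd_size D = card (bnodes D) + 2"

definition weak_width :: "bdd \<Rightarrow> nat" where
  "weak_width D = Max ({card {v \<in> bnodes D. bvar D v = x} | x. x \<in> bdd_vars D} \<union> {0})"

definition exists_quant :: "nat set \<Rightarrow> bdd \<Rightarrow> (nat \<Rightarrow> bool) \<Rightarrow> bool" where
  "exists_quant Z D a \<longleftrightarrow> (\<exists>a'. (\<forall>x. x \<notin> Z \<longrightarrow> a' x = a x) \<and> reaches D a' (bsrc D) True)"

end

theory Submission
  imports Defs "HOL-Library.FuncSet"
begin

inductive front :: "bdd \<Rightarrow> nat set \<Rightarrow> (nat \<Rightarrow> bool) \<Rightarrow> nat + bool \<Rightarrow> nat + bool \<Rightarrow> bool"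
  for D R a where
  fsink: "front D R a (Inr b) (Inr b)"
| fstop: "v \<in> bnodes D \<Longrightarrow> bvar D v \<in> R \<Longrightarrow> front D R a (Inl v) (Inl v)"
| fstep: "v \<in> bnodes D \<Longrightarrow> bvar D v \<notin> R \<Longrightarrow> front D R a (bsucc D v (a (bvar D v))) u
          \<Longrightarrow> front D R a (Inl v) u"

lemma reaches_front: "reaches D a u b \<Longrightarrow> \<exists>u'. front D R a u u'"
  by (induction rule: reaches.induct) (auto intro: front.intros)

lemma front_reaches: "front D R a u u' \<Longrightarrow> reaches D a u b \<Longrightarrow> reaches D a u' b"
proof (induction rule: front.induct)
  case (fstep v u)
  then show ?case by (auto elim: reaches.cases)
qed auto

lemma front_det: "front D R a u u1 \<Longrightarrow> (\<forall>x. x \<notin> R \<longrightarrow> a x = a' x) \<Longrightarrow> front D R a' u u2 \<Longrightarrow> u1 = u2"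
proof (induction arbitrary: u2 rule: front.induct)
  case (fsink b)
  then show ?case by (auto elim: front.cases)
next
  case (fstop v)
  then show ?case by (auto elim: front.cases)
next
  case (fstep v u)
  from fstep.prems(2) show ?case
    by (cases rule: front.cases) (use fstep in auto)
qed

lemma front_res: "front D R a u u' \<Longrightarrow> (\<exists>b. u' = Inr b) \<or> (\<exists>w. u' = Inl w \<and> w \<in> bnodes D \<and> bvar D w \<in> R)"
  by (induction rule: front.induct) auto

lemma reaches_fun: "reaches D a u b1 \<Longrightarrow> reaches D a u b2 \<Longrightarrow> b1 = b2"
proof (induction arbitrary: b2 rule: reaches.induct)
  case (sink b)
  then show ?case by (auto elim: reaches.cases)
next
  case (step v b)
  from step.prems show ?case by (cases rule: reaches.cases) (use step in auto)
qed

definition ordp :: "bdd \<Rightarrow> (nat \<Rightarrow> nat) \<Rightarrow> bool" where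
  "ordp D rho \<longleftrightarrow> (\<forall>v\<in>bnodes D. \<forall>c w. bsucc D v c = Inl w \<longrightarrow> rho (bvar D v) < rho (bvar D w))"

lemma reaches_agree:
  "reaches D a u b \<Longrightarrow> ordp D rho \<Longrightarrow> (\<forall>w x. u = Inl w \<longrightarrow> rho (bvar D w) \<le> rho x \<longrightarrow> a x = a' x) \<Longrightarrow> reaches D a' u b"
proof (induction rule: reaches.induct)
  case (sink D a b)
  then show ?case by (auto intro: reaches.intros)
next
  case (step v D a b)
  have eq: "a (bvar D v) = a' (bvar D v)" using step.prems by auto
  have "reaches D a' (bsucc D v (a (bvar D v))) b"
  proof (rule step.IH[OF step.prems(1)], intro allI impI)
    fix w x assume w: "bsucc D v (a (bvar D v)) = Inl w" and le: "rho (bvar D w) \<le> rho x"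
    have "rho (bvar D v) < rho (bvar D w)" using step.prems(1) step.hyps(1) w unfolding ordp_def by blast
    then show "a x = a' x" using step.prems le by auto
  qed
  then show ?case using eq step.hyps(1) by (auto intro: reaches.intros)
qed

lemma card_targets: "finite B \<Longrightarrow> card (Inl ` B \<union> range Inr :: (nat + bool) set) = card B + 2"
proof -
  assume f: "finite B"
  have "card (Inl ` B \<union> range Inr :: (nat + bool) set) = card (Inl ` B :: (nat+bool) set) + card (range Inr :: (nat + bool) set)"
    by (rule card_Un_disjoint) (use f in auto)
  moreover have "card (Inl ` B :: (nat+bool) set) = card B" by (rule card_image) (auto simp: inj_on_def)
  moreover have "card (range Inr :: (nat + bool) set) = 2"
  proof -
    have "(range Inr :: (nat + bool) set) = {Inr True, Inr False}" by (auto simp: UNIV_bool)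
    then show ?thesis by simp
  qed
  ultimately show ?thesis by simp
qed

lemma fooling:
  fixes alpha :: "'s \<Rightarrow> nat \<Rightarrow> bool" and beta :: "'c \<Rightarrow> nat \<Rightarrow> bool"
  assumes fin: "finite (bnodes E)" and ord: "ordp E rho" and comp: "computes E F"
    and disj: "L \<inter> R = {}" and lr: "\<forall>x\<in>L. \<forall>y\<in>R. rho x < rho y"
    and fool: "\<forall>S\<in>SS. \<forall>T\<in>SS. S \<noteq> T \<longrightarrow>
       (\<exists>c. F (\<lambda>x. if x \<in> R then beta c x else if x \<in> L then alpha S x else False)
          \<noteq> F (\<lambda>x. if x \<in> R then beta c x else if x \<in> L then alpha T x else False))"
  shows "card SS \<le> card (bnodes E) + 2"
proof -
  define hh where "hh S c = (\<lambda>x. if x \<in> R then beta c x else if x \<in> L then alpha S x else False)" for S c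
  define c0 where "c0 = (undefined :: 'c)"
  define g where "g S = (SOME u. front E R (hh S c0) (bsrc E) u)" for S
  have reach: "reaches E (hh S c) (bsrc E) (F (hh S c))" for S c
    using comp unfolding computes_def by blast
  have gfront: "front E R (hh S c0) (bsrc E) (g S)" for S
    unfolding g_def by (rule someI_ex) (rule reaches_front[OF reach])
  have gfront': "front E R (hh S c) (bsrc E) (g S)" for S c
  proof -
    obtain u where u: "front E R (hh S c) (bsrc E) u" using reaches_front[OF reach] by blast
    have "g S = u" by (rule front_det[OF gfront _ u]) (auto simp: hh_def)
    then show ?thesis using u by simp
  qed
  have inj: "inj_on g SS"
  proof (rule inj_onI, rule ccontr)
    fix S T assume S: "S \<in> SS" and T: "T \<in> SS" and eq: "g S = g T" and ne: "S \<noteq> T"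
    then obtain c where c: "F (hh S c) \<noteq> F (hh T c)" using fool unfolding hh_def by blast
    have r1: "reaches E (hh S c) (g S) (F (hh S c))" by (rule front_reaches[OF gfront' reach])
    have r2: "reaches E (hh T c) (g S) (F (hh T c))" using front_reaches[OF gfront' reach] eq by simp
    from front_res[OF gfront[of S]] show False
    proof
      assume "\<exists>b. g S = Inr b"
      then obtain b where "g S = Inr b" by blast
      then show False using r1 r2 c by (auto elim: reaches.cases)
    next
      assume "\<exists>w. g S = Inl w \<and> w \<in> bnodes E \<and> bvar E w \<in> R"
      then obtain w where w: "g S = Inl w" "bvar E w \<in> R" by blast
      have "reaches E (hh T c) (g S) (F (hh S c))"
      proof (rule reaches_agree[OF r1 ord], intro allI impI)
        fix w' x assume "g S = Inl w'" "rho (bvar E w') \<le> rho x"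
        then have "x \<notin> L" using w lr by (metis Inl_inject not_le)
        then show "hh S c x = hh T c x" by (simp add: hh_def)
      qed
      then show False using reaches_fun[OF _ r2] c by blast
    qed
  qed
  have sub: "g ` SS \<subseteq> Inl ` bnodes E \<union> range Inr"
  proof
    fix u assume "u \<in> g ` SS"
    then obtain S where "u = g S" by blast
    then show "u \<in> Inl ` bnodes E \<union> range Inr" using front_res[OF gfront[of S]] by auto
  qed
  have "card SS = card (g ` SS)" using card_image[OF inj] by simp
  also have "\<dots> \<le> card (Inl ` bnodes E \<union> range Inr :: (nat+bool) set)"
    by (rule card_mono[OF _ sub]) (use fin in simp)
  also have "\<dots> = card (bnodes E) + 2" by (rule card_targets[OF fin])
  finally show ?thesis .
qed

lemma fool_graph:
  fixes p q :: "nat \<Rightarrow> nat"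
  assumes fin: "finite (bnodes E)" and ord: "ordp E rho" and comp: "computes E F"
    and Fdef: "F = (\<lambda>\<alpha>. \<forall>(x,y)\<in>Edg. \<alpha> x \<or> \<alpha> y)"
    and disj: "L \<inter> R = {}" and lr: "\<forall>x\<in>L. \<forall>y\<in>R. rho x < rho y"
    and finI: "finite I" and pL: "p ` I \<subseteq> L" and qR: "q ` I \<subseteq> R"
    and EX: "Edg \<subseteq> (L \<union> R) \<times> (L \<union> R)" and noloop: "\<forall>(x,y)\<in>Edg. x \<noteq> y"
    and pq: "\<forall>i\<in>I. (p i, q i) \<in> Edg \<or> (q i, p i) \<in> Edg"
    and pp: "\<forall>(x,y)\<in>Edg. \<forall>l\<in>I. \<forall>l'\<in>I. \<not> (x = p l \<and> y = p l')"
    and pqn: "\<forall>(x,y)\<in>Edg. \<forall>l\<in>I. \<forall>i\<in>I. l \<noteq> i \<longrightarrow> \<not> (x = p l \<and> y = q i) \<and> \<not> (x = q i \<and> y = p l)"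
  shows "2 ^ card I \<le> card (bnodes E) + 2"
proof -
  define alpha where "alpha S x = (\<not> (\<exists>l\<in>S. x = p l))" for S :: "nat set" and x
  define beta where "beta i x = (x \<noteq> q i)" for i x
  define hh where "hh S c = (\<lambda>x. if x \<in> R then beta c x else if x \<in> L then alpha S x else False)" for S c
  have key: "F (hh S i) = (i \<notin> S)" if S: "S \<subseteq> I" and i: "i \<in> I" for S i
  proof
    assume F: "F (hh S i)"
    show "i \<notin> S"
    proof
      assume iS: "i \<in> S"
      have "p i \<in> L" "q i \<in> R" using pL qR i by auto
      then have "\<not> hh S i (p i)" "\<not> hh S i (q i)" using disj iS by (auto simp: hh_def alpha_def beta_def)
      then show False using F pq i unfolding Fdef by fastforce
    qed
  next
    assume iS: "i \<notin> S"
    have zero: "\<not> hh S i x \<Longrightarrow> x \<in> L \<union> R \<Longrightarrow> (\<exists>l\<in>S. x = p l) \<or> x = q i" for x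
      by (auto simp: hh_def alpha_def beta_def split: if_splits)
    have "\<not> (\<not> hh S i x \<and> \<not> hh S i y)" if e: "(x, y) \<in> Edg" for x y
    proof
      assume "\<not> hh S i x \<and> \<not> hh S i y"
      then have nx: "\<not> hh S i x" and ny: "\<not> hh S i y" by auto
      have xs: "x \<in> L \<union> R" "y \<in> L \<union> R" using EX e by auto
      from zero[OF nx xs(1)] zero[OF ny xs(2)] show False
      proof (elim disjE bexE)
        fix l l' assume "l \<in> S" "l' \<in> S" "x = p l" "y = p l'"
        then show False using pp e S by fastforce
      next
        fix l assume "l \<in> S" "x = p l" "y = q i"
        moreover have "l \<noteq> i" using iS \<open>l \<in> S\<close> by auto
        ultimately show False using pqn e S i by fastforce
      next
        fix l assume "l \<in> S" "y = p l" "x = q i"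
        moreover have "l \<noteq> i" using iS \<open>l \<in> S\<close> by auto
        ultimately show False using pqn e S i by fastforce
      next
        assume "x = q i" "y = q i" then show False using noloop e by auto
      qed
    qed
    then show "F (hh S i)" unfolding Fdef by auto
  qed
  have "card (Pow I) \<le> card (bnodes E) + 2"
  proof (rule fooling[OF fin ord comp disj lr, where alpha=alpha and beta=beta and SS="Pow I"])
    show "\<forall>S\<in>Pow I. \<forall>T\<in>Pow I. S \<noteq> T \<longrightarrow> (\<exists>c. F (\<lambda>x. if x \<in> R then beta c x else if x \<in> L then alpha S x else False)
          \<noteq> F (\<lambda>x. if x \<in> R then beta c x else if x \<in> L then alpha T x else False))"
    proof (intro ballI impI)
      fix S T assume S: "S \<in> Pow I" and T: "T \<in> Pow I" and ne: "S \<noteq> T"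
      then obtain i where i: "i \<in> I" "(i \<in> S) \<noteq> (i \<in> T)" by auto
      have "F (hh S i) \<noteq> F (hh T i)" using key[of S i] key[of T i] S T i by auto
      then show "\<exists>c. F (\<lambda>x. if x \<in> R then beta c x else if x \<in> L then alpha S x else False)
          \<noteq> F (\<lambda>x. if x \<in> R then beta c x else if x \<in> L then alpha T x else False)"
        unfolding hh_def by blast
    qed
  qed
  then show ?thesis using card_Pow[of I] finI by simp
qed

definition dsucc :: "nat \<Rightarrow> (nat \<Rightarrow> nat \<Rightarrow> nat) \<Rightarrow> nat \<Rightarrow> bool \<Rightarrow> nat + bool" where
  "dsucc m \<phi> v b =
   (if v < 8*m then (if b then Inl (8*m+v) else if Suc v < 8*m then Inl (Suc v) else Inr False)
    else if v < 16*m then (if b then Inr False else Inl (16*m + (v - 8*m)*8))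
    else if v < 80*m then (if b then Inl (80*m + \<phi> ((v - 16*m) mod 8) ((v - 16*m) div 8))
          else if (v - 16*m) mod 8 < 7 then Inl (Suc v) else Inr False)
    else (if b then Inr False else Inr True))"

definition mkD :: "nat \<Rightarrow> (nat \<Rightarrow> nat \<Rightarrow> nat) \<Rightarrow> bdd" where
  "mkD m \<phi> = \<lparr>bnodes = {..<88*m}, bsrc = Inl 0, bvar = id, bsucc = dsucc m \<phi>\<rparr>"

definition ZS :: "nat \<Rightarrow> nat set" where
  "ZS m = {..<8*m} \<union> {16*m..<80*m}"

definition frange :: "nat \<Rightarrow> (nat \<Rightarrow> nat \<Rightarrow> nat) \<Rightarrow> bool" where
  "frange m \<phi> \<longleftrightarrow> (\<forall>j<8. \<forall>k<8*m. \<phi> j k < 8*m)"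

lemma mkD_simps [simp]: "bnodes (mkD m \<phi>) = {..<88*m}" "bsrc (mkD m \<phi>) = Inl 0"
  "bvar (mkD m \<phi>) = id" "bsucc (mkD m \<phi>) = dsucc m \<phi>"
  by (auto simp: mkD_def)

lemma tblock: fixes m v :: nat assumes "16*m \<le> v" "v < 80*m"
  shows "(v - 16*m) div 8 < 8*m" "(v - 16*m) mod 8 < 8"
  using assms by auto

lemma dsucc_ok:
  assumes fr: "frange m \<phi>" and v: "v < 88*m" and s: "dsucc m \<phi> v c = Inl w"
  shows "v < w \<and> w < 88*m"
proof -
  consider "v < 8*m" | "8*m \<le> v" "v < 16*m" | "16*m \<le> v" "v < 80*m" | "80*m \<le> v" by linarith
  then show ?thesis
  proof cases
    case 1 then show ?thesis using s by (auto simp: dsucc_def split: if_splits)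
  next
    case 2
    have "(v - 8*m)*8 < 8*m*8" using 2 by simp
    then show ?thesis using s 2 by (auto simp: dsucc_def split: if_splits)
  next
    case 3
    have a: "\<phi> ((v - 16*m) mod 8) ((v - 16*m) div 8) < 8*m" using fr tblock[OF 3] unfolding frange_def by blast
    have b: "(v - 16*m) mod 8 < 7 \<Longrightarrow> Suc v < 80*m"
    proof -
      assume md: "(v - 16*m) mod 8 < 7"
      have "v - 16*m = 8 * ((v - 16*m) div 8) + (v - 16*m) mod 8" by simp
      moreover have "(v - 16*m) div 8 < 8*m" using tblock[OF 3] by simp
      ultimately show ?thesis using md 3 by linarith
    qed
    show ?thesis using s 3 a b by (auto simp: dsucc_def split: if_splits)
  next
    case 4 then show ?thesis using s by (auto simp: dsucc_def split: if_splits)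
  qed
qed

lemma mkD_obdd: assumes "m \<ge> 1" "frange m \<phi>" shows "is_obdd (mkD m \<phi>)"
  unfolding is_obdd_def
proof (intro conjI)
  show "finite (bnodes (mkD m \<phi>))" by simp
  show "valid_target (mkD m \<phi>) (bsrc (mkD m \<phi>))" using assms by (simp add: valid_target_def)
  show "\<forall>v\<in>bnodes (mkD m \<phi>). \<forall>c. valid_target (mkD m \<phi>) (bsucc (mkD m \<phi>) v c)"
  proof (intro ballI allI)
    fix v c assume v: "v \<in> bnodes (mkD m \<phi>)"
    show "valid_target (mkD m \<phi>) (bsucc (mkD m \<phi>) v c)"
    proof (cases "dsucc m \<phi> v c")
      case (Inl w)
      have "v < 88*m" using v by simp
      then have "w < 88*m" using dsucc_ok[OF assms(2), of v c w] Inl by blast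
      then show ?thesis using Inl unfolding valid_target_def by simp
    next
      case (Inr b) then show ?thesis unfolding valid_target_def by simp
    qed
  qed
  have "\<forall>v\<in>bnodes (mkD m \<phi>). \<forall>c w. bsucc (mkD m \<phi>) v c = Inl w \<longrightarrow> id (bvar (mkD m \<phi>) v) < id (bvar (mkD m \<phi>) w)"
  proof (intro ballI allI impI)
    fix v c w assume "v \<in> bnodes (mkD m \<phi>)" "bsucc (mkD m \<phi>) v c = Inl w"
    then have "v < 88*m" "dsucc m \<phi> v c = Inl w" by auto
    then show "id (bvar (mkD m \<phi>) v) < id (bvar (mkD m \<phi>) w)" using dsucc_ok[OF assms(2), of v c w] by simp
  qed
  moreover have "inj (id :: nat \<Rightarrow> nat)" by simp
  ultimately show "\<exists>rho::nat\<Rightarrow>nat. inj rho \<and> (\<forall>v\<in>bnodes (mkD m \<phi>). \<forall>c w. bsucc (mkD m \<phi>) v c = Inl w \<longrightarrow> rho (bvar (mkD m \<phi>) v) < rho (bvar (mkD m \<phi>) w))"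
    by blast
qed

lemma mkD_vars: "bdd_vars (mkD m \<phi>) = {..<88*m}"
  by (simp add: bdd_vars_def)

lemma ZS_sub: "ZS m \<subseteq> bdd_vars (mkD m \<phi>)"
  by (auto simp: ZS_def mkD_vars)

definition QQ :: "nat \<Rightarrow> (nat \<Rightarrow> nat \<Rightarrow> nat) \<Rightarrow> (nat \<Rightarrow> bool) \<Rightarrow> nat \<Rightarrow> bool" where
  "QQ m \<phi> a v =
   (if v < 8*m then (\<exists>k. v \<le> k \<and> k < 8*m \<and> (\<exists>j<8. \<not> a (8*m+k) \<and> \<not> a (80*m + \<phi> j k)))
    else if v < 16*m then (\<exists>j<8. \<not> a v \<and> \<not> a (80*m + \<phi> j (v - 8*m)))
    else if v < 80*m then (\<exists>j. (v - 16*m) mod 8 \<le> j \<and> j < 8 \<and> \<not> a (80*m + \<phi> j ((v - 16*m) div 8)))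
    else \<not> a v)"

definition QS :: "nat \<Rightarrow> (nat \<Rightarrow> nat \<Rightarrow> nat) \<Rightarrow> (nat \<Rightarrow> bool) \<Rightarrow> nat + bool \<Rightarrow> bool" where
  "QS m \<phi> a u = (case u of Inl v \<Rightarrow> QQ m \<phi> a v | Inr b \<Rightarrow> b)"

lemma tdecomp: fixes m v :: nat assumes "16*m \<le> v"
  shows "v = 16*m + 8 * ((v - 16*m) div 8) + (v - 16*m) mod 8"
  using assms by simp

lemma QQ_step:
  assumes fr: "frange m \<phi>" and v: "v < 88*m" and b: "b"
    and IH: "b \<Longrightarrow> QS m \<phi> a (dsucc m \<phi> v (a v))"
  shows "QQ m \<phi> a v"
proof -
  have Q: "QS m \<phi> a (dsucc m \<phi> v (a v))" using IH b by blast
  consider "v < 8*m" | "8*m \<le> v" "v < 16*m" | "16*m \<le> v" "v < 80*m" | "80*m \<le> v" by linarith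
  then show ?thesis
  proof cases
    case 1
    show ?thesis
    proof (cases "a v")
      case True
      then have "QQ m \<phi> a (8*m+v)" using Q 1 by (simp add: dsucc_def QS_def)
      then show ?thesis using 1 True by (auto simp: QQ_def)
    next
      case False
      show ?thesis
      proof (cases "Suc v < 8*m")
        case True
        then have "QQ m \<phi> a (Suc v)" using Q 1 False by (simp add: dsucc_def QS_def)
        then show ?thesis using 1 True by (auto simp: QQ_def intro: Suc_leD)
      next
        case F2: False
        then show ?thesis using Q 1 False by (simp add: dsucc_def QS_def)
      qed
    qed
  next
    case 2
    show ?thesis
    proof (cases "a v")
      case True
      then show ?thesis using Q 2 by (simp add: dsucc_def QS_def)
    next
      case False
      have lt: "(v - 8*m)*8 < 8*m*8" using 2 by simp
      have "QQ m \<phi> a (16*m + (v - 8*m)*8)" using Q 2 False by (simp add: dsucc_def QS_def)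
      then have "\<exists>j. j < 8 \<and> \<not> a (80*m + \<phi> j (v - 8*m))" using lt by (simp add: QQ_def)
      then show ?thesis using 2 False by (auto simp: QQ_def)
    qed
  next
    case 3
    define k where "k = (v - 16*m) div 8"
    define j where "j = (v - 16*m) mod 8"
    have vkj: "v = 16*m + 8*k + j" unfolding k_def j_def using tdecomp[OF 3(1)] .
    have j8: "j < 8" unfolding j_def by simp
    have k8: "k < 8*m" using 3 vkj by linarith
    show ?thesis
    proof (cases "a v")
      case True
      have "QQ m \<phi> a (80*m + \<phi> j k)" using Q 3 True by (simp add: dsucc_def QS_def k_def j_def)
      then have "\<not> a (80*m + \<phi> j k)" by (simp add: QQ_def)
      then show ?thesis using 3 j8 by (auto simp: QQ_def k_def j_def)
    next
      case False
      show ?thesis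
      proof (cases "j < 7")
        case True
        have sv: "Suc v < 80*m" using vkj k8 True by linarith
        have "QQ m \<phi> a (Suc v)" using Q 3 False True by (simp add: dsucc_def QS_def j_def)
        moreover have "(Suc v - 16*m) mod 8 = Suc j" "(Suc v - 16*m) div 8 = k"
          using vkj True by auto
        ultimately have "\<exists>j'. Suc j \<le> j' \<and> j' < 8 \<and> \<not> a (80*m + \<phi> j' k)" using sv 3
          by (simp add: QQ_def)
        then obtain j' where "Suc j \<le> j'" "j' < 8" "\<not> a (80*m + \<phi> j' k)" by blast
        then have "\<exists>j''. j \<le> j'' \<and> j'' < 8 \<and> \<not> a (80*m + \<phi> j'' k)" by (intro exI[of _ j']) auto
        then show ?thesis using 3 unfolding QQ_def k_def[symmetric] j_def[symmetric] by simp
      next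
        case F2: False
        then show ?thesis using Q 3 False by (simp add: dsucc_def QS_def j_def)
      qed
    qed
  next
    case 4
    show ?thesis
    proof (cases "a v")
      case True
      then show ?thesis using Q 4 by (simp add: dsucc_def QS_def)
    next
      case False
      then show ?thesis using 4 by (simp add: QQ_def)
    qed
  qed
qed

lemma reaches_QS: "reaches D a u b \<Longrightarrow> D = mkD m \<phi> \<Longrightarrow> frange m \<phi> \<Longrightarrow> b \<Longrightarrow> QS m \<phi> a u"
proof (induction rule: reaches.induct)
  case (sink D a b)
  then show ?case by (simp add: QS_def)
next
  case (step v D a b)
  have "QQ m \<phi> a v"
    by (rule QQ_step[OF step.prems(2) _ step.prems(3)]) (use step in auto)
  then show ?case by (simp add: QS_def)
qed

lemma mkD_sem_1:
  assumes m: "m \<ge> 1" and fr: "frange m \<phi>" and ex: "exists_quant (ZS m) (mkD m \<phi>) a"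
  shows "\<exists>k<8*m. \<exists>j<8. \<not> a (8*m+k) \<and> \<not> a (80*m + \<phi> j k)"
proof -
  obtain a' where ag: "\<forall>x. x \<notin> ZS m \<longrightarrow> a' x = a x" and r: "reaches (mkD m \<phi>) a' (Inl 0) True"
    using ex unfolding exists_quant_def by auto
  have "QS m \<phi> a' (Inl 0)" by (rule reaches_QS[OF r refl fr]) simp
  then have "QQ m \<phi> a' 0" by (simp add: QS_def)
  then obtain k j where kj: "k < 8*m" "j < 8" "\<not> a' (8*m+k)" "\<not> a' (80*m + \<phi> j k)"
    using m by (auto simp: QQ_def)
  have "8*m+k \<notin> ZS m" "80*m + \<phi> j k \<notin> ZS m" using kj by (auto simp: ZS_def)
  then show ?thesis using kj ag by auto
qed

lemma mkD_sem_2: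
  assumes m: "m \<ge> 1" and fr: "frange m \<phi>" and k: "k < 8*m" and j: "j < 8"
    and ak: "\<not> a (8*m+k)" and aw: "\<not> a (80*m + \<phi> j k)"
  shows "exists_quant (ZS m) (mkD m \<phi>) a"
proof -
  define a' where "a' x = (if x < 8*m then x = k else if 16*m \<le> x \<and> x < 80*m then x = 16*m + 8*k + j else a x)" for x
  have ag: "\<forall>x. x \<notin> ZS m \<longrightarrow> a' x = a x" by (auto simp: a'_def ZS_def)
  let ?D = "mkD m \<phi>"
  have phik: "\<phi> j k < 8*m" using fr k j unfolding frange_def by blast
  have rB: "reaches ?D a' (Inl (80*m + \<phi> j k)) True"
  proof (rule reaches.step)
    show "80*m + \<phi> j k \<in> bnodes ?D" using phik by simp
    have "\<not> a' (80*m + \<phi> j k)" using aw by (simp add: a'_def)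
    then have "bsucc ?D (80*m + \<phi> j k) (a' (bvar ?D (80*m + \<phi> j k))) = Inr True"
      by (simp add: dsucc_def)
    then show "reaches ?D a' (bsucc ?D (80*m + \<phi> j k) (a' (bvar ?D (80*m + \<phi> j k)))) True"
      by (simp add: reaches.sink)
  qed
  have kk: "16*m + 8*k + j < 80*m" using k j by linarith
  have rT: "reaches ?D a' (Inl (16*m + 8*k + (j - d))) True" if "d \<le> j" for d
    using that
  proof (induction d)
    case 0
    show ?case
    proof (rule reaches.step)
      show "16*m + 8*k + (j - 0) \<in> bnodes ?D" using kk by simp
      have md: "(16*m + 8*k + j - 16*m) mod 8 = j" "(16*m + 8*k + j - 16*m) div 8 = k" using j by auto
      have "a' (16*m + 8*k + j)" using kk by (simp add: a'_def)
      then have "bsucc ?D (16*m + 8*k + (j - 0)) (a' (bvar ?D (16*m + 8*k + (j - 0)))) = Inl (80*m + \<phi> j k)"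
        using kk md by (simp add: dsucc_def)
      then show "reaches ?D a' (bsucc ?D (16*m + 8*k + (j - 0)) (a' (bvar ?D (16*m + 8*k + (j - 0))))) True"
        using rB by simp
    qed
  next
    case (Suc d)
    define v where "v = 16*m + 8*k + (j - Suc d)"
    have sv: "Suc v = 16*m + 8*k + (j - d)" using Suc.prems unfolding v_def by simp
    show ?case unfolding v_def[symmetric]
    proof (rule reaches.step)
      show "v \<in> bnodes ?D" using kk unfolding v_def by simp
      have md: "(v - 16*m) mod 8 = j - Suc d" using j unfolding v_def by auto
      have "\<not> a' v" using Suc.prems kk unfolding v_def a'_def by auto
      moreover have "16*m \<le> v" "v < 80*m" using kk unfolding v_def by auto
      ultimately have "bsucc ?D v (a' (bvar ?D v)) = Inl (Suc v)"
        using md Suc.prems j by (simp add: dsucc_def)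
      then show "reaches ?D a' (bsucc ?D v (a' (bvar ?D v))) True"
        using Suc.IH Suc.prems sv by simp
    qed
  qed
  have rA: "reaches ?D a' (Inl (8*m + k)) True"
  proof (rule reaches.step)
    show "8*m + k \<in> bnodes ?D" using k by simp
    have "\<not> a' (8*m+k)" using ak by (simp add: a'_def)
    then have "bsucc ?D (8*m+k) (a' (bvar ?D (8*m+k))) = Inl (16*m + 8*k + (j - j))"
      using k by (simp add: dsucc_def)
    then show "reaches ?D a' (bsucc ?D (8*m+k) (a' (bvar ?D (8*m+k)))) True"
      using rT[of j] by simp
  qed
  have rS: "reaches ?D a' (Inl (k - d)) True" if "d \<le> k" for d
    using that
  proof (induction d)
    case 0
    show ?case
    proof (rule reaches.step)
      show "k - 0 \<in> bnodes ?D" using k by simp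
      have "bsucc ?D (k - 0) (a' (bvar ?D (k - 0))) = Inl (8*m+k)"
        using k by (simp add: dsucc_def a'_def)
      then show "reaches ?D a' (bsucc ?D (k - 0) (a' (bvar ?D (k - 0)))) True" using rA by simp
    qed
  next
    case (Suc d)
    show ?case
    proof (rule reaches.step)
      show "k - Suc d \<in> bnodes ?D" using k by simp
      have "bsucc ?D (k - Suc d) (a' (bvar ?D (k - Suc d))) = Inl (k - d)"
        using k Suc.prems by (simp add: dsucc_def a'_def Suc_diff_Suc) arith
      then show "reaches ?D a' (bsucc ?D (k - Suc d) (a' (bvar ?D (k - Suc d)))) True"
        using Suc by simp
    qed
  qed
  have "reaches ?D a' (bsrc ?D) True" using rS[of k] by simp
  then show ?thesis unfolding exists_quant_def using ag by blast
qed

lemma mkD_sem: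
  assumes "m \<ge> 1" "frange m \<phi>"
  shows "exists_quant (ZS m) (mkD m \<phi>) a \<longleftrightarrow> (\<exists>k<8*m. \<exists>j<8. \<not> a (8*m+k) \<and> \<not> a (80*m + \<phi> j k))"
  using mkD_sem_1[OF assms] mkD_sem_2[OF assms] by blast

lemma exists_low_indeg:
  fixes Rel :: "'a \<Rightarrow> 'a \<Rightarrow> bool"
  assumes fin: "finite D" and ne: "D \<noteq> {}" and out: "\<forall>v\<in>D. card {w\<in>D. Rel v w} \<le> c"
  shows "\<exists>v\<in>D. card {u\<in>D. Rel u v} \<le> c"
proof (rule ccontr)
  assume "\<not> ?thesis"
  then have gt: "\<forall>v\<in>D. c + 1 \<le> card {u\<in>D. Rel u v}" by auto
  have c1: "card {u\<in>D. P u} = (\<Sum>u\<in>D. if P u then 1 else 0)" for P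
    using fin by (simp add: sum.inter_filter[symmetric])
  have "(c+1) * card D = (\<Sum>v\<in>D. c + 1)" by simp
  also have "\<dots> \<le> (\<Sum>v\<in>D. card {u\<in>D. Rel u v})" by (rule sum_mono) (use gt in auto)
  also have "\<dots> = (\<Sum>v\<in>D. \<Sum>u\<in>D. if Rel u v then 1 else 0)" by (simp add: c1)
  also have "\<dots> = (\<Sum>u\<in>D. \<Sum>v\<in>D. if Rel u v then 1 else 0)" by (rule sum.swap)
  also have "\<dots> = (\<Sum>u\<in>D. card {w\<in>D. Rel u w})" by (simp add: c1)
  also have "\<dots> \<le> (\<Sum>u\<in>D. c)" by (rule sum_mono) (use out in auto)
  also have "\<dots> = c * card D" by simp
  finally have "(c+1) * card D \<le> c * card D" .
  moreover have "card D > 0" using fin ne by (simp add: card_gt_0_iff)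
  ultimately show False by simp
qed

lemma indep:
  fixes Rel :: "'a \<Rightarrow> 'a \<Rightarrow> bool"
  shows "finite D \<Longrightarrow> \<forall>v\<in>D. card {w\<in>D. Rel v w} \<le> c \<Longrightarrow>
    \<exists>I\<subseteq>D. card D \<le> (2*c+1) * card I \<and> (\<forall>v\<in>I. \<forall>w\<in>I. v \<noteq> w \<longrightarrow> \<not> Rel v w)"
proof (induction "card D" arbitrary: D rule: less_induct)
  case less
  show ?case
  proof (cases "D = {}")
    case True then show ?thesis by auto
  next
    case False
    obtain v where v: "v \<in> D" and inv: "card {u\<in>D. Rel u v} \<le> c"
      using exists_low_indeg[OF less.prems(1) False less.prems(2)] by blast
    define Nb where "Nb = insert v ({w\<in>D. Rel v w} \<union> {u\<in>D. Rel u v})"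
    have NbD: "Nb \<subseteq> D" using v by (auto simp: Nb_def)
    have cNb: "card Nb \<le> 2*c+1"
    proof -
      have "card Nb \<le> Suc (card ({w\<in>D. Rel v w} \<union> {u\<in>D. Rel u v}))"
        unfolding Nb_def by (rule card_insert_le_m1) (auto simp: card_insert_if less.prems(1))
      also have "\<dots> \<le> Suc (card {w\<in>D. Rel v w} + card {u\<in>D. Rel u v})"
        using card_Un_le by simp
      also have "\<dots> \<le> 2*c+1" using inv less.prems(2) v by fastforce
      finally show ?thesis .
    qed
    define D' where "D' = D - Nb"
    have fD': "finite D'" using less.prems(1) by (simp add: D'_def)
    have "D - Nb \<subset> D" using v by (auto simp: Nb_def)
    then have lt: "card D' < card D" unfolding D'_def using less.prems(1) by (rule psubset_card_mono[rotated])
    have outD': "\<forall>x\<in>D'. card {w\<in>D'. Rel x w} \<le> c"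
    proof
      fix x assume "x \<in> D'"
      then have "card {w\<in>D'. Rel x w} \<le> card {w\<in>D. Rel x w}"
        by (intro card_mono) (auto simp: D'_def less.prems(1))
      then show "card {w\<in>D'. Rel x w} \<le> c" using less.prems(2) \<open>x \<in> D'\<close> by (auto simp: D'_def)
    qed
    obtain I' where I': "I' \<subseteq> D'" "card D' \<le> (2*c+1) * card I'" "\<forall>x\<in>I'. \<forall>w\<in>I'. x \<noteq> w \<longrightarrow> \<not> Rel x w"
      using less.hyps[OF lt fD' outD'] by blast
    have vI': "v \<notin> I'" using I'(1) by (auto simp: D'_def Nb_def)
    have finI': "finite I'" using I'(1) fD' finite_subset by blast
    have cardI: "card (insert v I') = Suc (card I')" using vI' finI' by simp
    have "card D \<le> card D' + card Nb"
      unfolding D'_def using card_Diff_subset[OF finite_subset[OF NbD less.prems(1)] NbD] card_mono[OF less.prems(1) NbD]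
      by linarith
    then have "card D \<le> (2*c+1) * card (insert v I')" using I'(2) cNb cardI by simp
    moreover have "insert v I' \<subseteq> D" using I'(1) v by (auto simp: D'_def)
    moreover have "\<forall>x\<in>insert v I'. \<forall>w\<in>insert v I'. x \<noteq> w \<longrightarrow> \<not> Rel x w"
      using I'(1,3) by (auto simp: D'_def Nb_def)
    ultimately show ?thesis by blast
  qed
qed

definition good :: "nat \<Rightarrow> (nat \<Rightarrow> nat \<Rightarrow> nat) \<Rightarrow> bool" where
  "good m \<phi> \<longleftrightarrow> frange m \<phi> \<and> (\<forall>A0 C. A0 \<subseteq> {..<8*m} \<longrightarrow> card A0 = 4*m \<longrightarrow> C \<subseteq> {..<8*m} \<longrightarrow> card C = 3*m
      \<longrightarrow> (\<exists>j<8. \<exists>k\<in>A0. \<phi> j k \<in> C))"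

lemma num_ineq: fixes m :: nat assumes "m \<ge> 1"
  shows "2 ^ (16*m) * (40*m^2)^(32*m) < (64*m^2)^(32*m)"
proof -
  have a: "2 ^ (16*m) * (40*m^2)^(32*m) = (2^16 * (40*m^2)^32)^m"
    by (simp only: power_mult power_mult_distrib)
  have b: "(64*m^2)^(32*m) = ((64*m^2)^32)^m" by (simp only: power_mult)
  have m2: "(m^2)^32 > 0" using assms by simp
  have "(2::nat)^16 * (40::nat)^32 < 64^32" by simp
  then have "2^16 * 40^32 * (m^2)^32 < 64^32 * (m^2)^32" using m2 by simp
  then have c: "2^16 * (40*m^2)^32 < (64*m^2)^32" by (simp add: power_mult_distrib mult.assoc)
  have "(2^16 * (40*m^2)^32)^m < ((64*m^2)^32)^m"
    by (rule power_strict_mono[OF c]) (use assms in auto)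
  then show ?thesis using a b by simp
qed

lemma cardOmega: fixes m :: nat shows "card (\<Pi>\<^sub>E i\<in>{..<(8::nat)} \<times> {..<8*m}. {..<8*m}) = (64*m^2)^(32*m)"
proof -
  have "card (\<Pi>\<^sub>E i\<in>{..<(8::nat)} \<times> {..<8*m}. {..<8*m}) = (\<Prod>i\<in>{..<(8::nat)} \<times> {..<8*m}. card {..<8*m})"
    by (rule card_PiE) simp
  also have "\<dots> = (8*m) ^ (8*(8*m))" by (simp only: prod_constant card_cartesian_product card_lessThan)
  also have "\<dots> = (8*m)^(2*(32*m))" by (simp only: mult.assoc[symmetric]) simp
  also have "\<dots> = ((8*m)^2)^(32*m)" by (simp only: power_mult)
  also have "\<dots> = (64*m^2)^(32*m)" by (simp add: power_mult_distrib)
  finally show ?thesis .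
qed

lemma prod_split: fixes m :: nat
  assumes A0: "A0 \<subseteq> {..<8*m}" "card A0 = 4*m"
  shows "(\<Prod>k<8*m. if k \<in> A0 then 5*m else 8*m) = (5*m)^(4*m) * (8*m)^(4*m)"
proof -
  have fA: "finite A0" by (rule finite_subset[OF A0(1)]) simp
  have cA: "card ({..<8*m} - A0) = 4*m" using A0 fA by (simp add: card_Diff_subset)
  have e1: "{..<8*m} \<inter> {k. k \<in> A0} = A0" using A0 by auto
  have e2: "{..<8*m} \<inter> - {k. k \<in> A0} = {..<8*m} - A0" by auto
  have "(\<Prod>k<8*m. if k \<in> A0 then 5*m else 8*m) = (\<Prod>k\<in>{..<8*m} \<inter> {k. k \<in> A0}. 5*m) * (\<Prod>k\<in>{..<8*m} \<inter> - {k. k \<in> A0}. 8*m)"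
    by (rule prod.If_cases) simp
  then show ?thesis unfolding e1 e2 prod_constant cA A0(2) .
qed

lemma cardBad: fixes m :: nat
  assumes A0: "A0 \<subseteq> {..<8*m}" "card A0 = 4*m" and C: "C \<subseteq> {..<8*m}" "card C = 3*m"
  shows "card (\<Pi>\<^sub>E i\<in>{..<(8::nat)} \<times> {..<8*m}. if snd i \<in> A0 then {..<8*m} - C else {..<8*m}) = (40*m^2)^(32*m)"
proof -
  have fC: "finite C" by (rule finite_subset[OF C(1)]) simp
  have cC: "card ({..<8*m} - C) = 5*m" using C fC by (simp add: card_Diff_subset)
  have "card (\<Pi>\<^sub>E i\<in>{..<(8::nat)} \<times> {..<8*m}. if snd i \<in> A0 then {..<8*m} - C else {..<8*m})
     = (\<Prod>i\<in>{..<(8::nat)} \<times> {..<8*m}. card (if snd i \<in> A0 then {..<8*m} - C else {..<8*m}))"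
    by (rule card_PiE) simp
  also have "\<dots> = (\<Prod>i\<in>{..<(8::nat)} \<times> {..<8*m}. if snd i \<in> A0 then 5*m else 8*m)"
    by (rule prod.cong) (use cC in auto)
  also have "\<dots> = (\<Prod>j<(8::nat). \<Prod>k<8*m. if k \<in> A0 then 5*m else 8*m)"
    unfolding prod.cartesian_product by (rule prod.cong) auto
  also have "\<dots> = (\<Prod>j<(8::nat). (5*m)^(4*m) * (8*m)^(4*m))"
    by (simp only: prod_split[OF A0])
  also have "\<dots> = ((5*m)^(4*m) * (8*m)^(4*m))^8"
    by (simp only: prod_constant card_lessThan)
  also have "\<dots> = ((5*m*(8*m))^(4*m))^8" by (simp only: power_mult_distrib)
  also have "\<dots> = ((40*m^2)^(4*m))^8" by (simp add: power2_eq_square)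
  also have "\<dots> = (40*m^2)^(4*m*8)" by (simp only: power_mult)
  also have "\<dots> = (40*m^2)^(32*m)" by (simp add: mult.commute)
  finally show ?thesis .
qed

lemma exists_good: assumes m: "m \<ge> 1" shows "\<exists>\<phi>. good m \<phi>"
proof (rule ccontr)
  assume nog: "\<not> (\<exists>\<phi>. good m \<phi>)"
  define N where "N = 8*m"
  define Dom where "Dom = {..<(8::nat)} \<times> {..<N}"
  define \<Omega> where "\<Omega> = (\<Pi>\<^sub>E i\<in>Dom. {..<N})"
  define P where "P = {(A0, C). A0 \<subseteq> {..<N} \<and> card A0 = 4*m \<and> C \<subseteq> {..<N} \<and> card C = 3*m}"
  define Bad where "Bad p = (\<Pi>\<^sub>E i\<in>Dom. if snd i \<in> fst p then {..<N} - snd p else {..<N})" for p :: "nat set \<times> nat set"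
  have finDom: "finite Dom" by (simp add: Dom_def)
  have finP: "finite P"
  proof -
    have "P \<subseteq> Pow {..<N} \<times> Pow {..<N}" by (auto simp: P_def)
    then show ?thesis by (rule finite_subset) simp
  qed
  have cardP: "card P \<le> 2^(16*m)"
  proof -
    have "P \<subseteq> Pow {..<N} \<times> Pow {..<N}" by (auto simp: P_def)
    then have "card P \<le> card (Pow {..<N} \<times> Pow {..<N})" by (rule card_mono[rotated]) simp
    also have "\<dots> = 2^N * 2^N" by (simp add: card_cartesian_product card_Pow)
    also have "\<dots> = 2^(16*m)" by (simp add: N_def power_add[symmetric])
    finally show ?thesis .
  qed
  have cardOmega: "card \<Omega> = (64*m^2)^(32*m)" unfolding \<Omega>_def Dom_def N_def by (rule cardOmega)
  have cardBad: "card (Bad p) = (40*m^2)^(32*m)" if p: "p \<in> P" for p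
  proof -
    obtain A0 C where pAC: "p = (A0, C)" by (cases p)
    have A0: "A0 \<subseteq> {..<8*m}" "card A0 = 4*m" and C: "C \<subseteq> {..<8*m}" "card C = 3*m"
      using p pAC by (auto simp: P_def N_def)
    show ?thesis unfolding Bad_def pAC fst_conv snd_conv Dom_def N_def by (rule cardBad[OF A0 C])
  qed
  have cover: "\<Omega> \<subseteq> (\<Union>p\<in>P. Bad p)"
  proof
    fix F assume F: "F \<in> \<Omega>"
    define \<phi> where "\<phi> j k = F (j, k)" for j k
    have fr: "frange m \<phi>" using F unfolding frange_def \<phi>_def \<Omega>_def Dom_def N_def by (auto simp: PiE_iff)
    obtain A0 C where A0: "A0 \<subseteq> {..<8*m}" "card A0 = 4*m" and C: "C \<subseteq> {..<8*m}" "card C = 3*m"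
      and no: "\<not> (\<exists>j<8. \<exists>k\<in>A0. \<phi> j k \<in> C)"
    proof -
      have "\<not> good m \<phi>" using nog by (rule contrapos_nn) (rule exI)
      then show ?thesis using fr that unfolding good_def by blast
    qed
    have "(A0, C) \<in> P" using A0 C by (simp add: P_def N_def)
    moreover have "F \<in> Bad (A0, C)"
      using F no unfolding Bad_def \<Omega>_def \<phi>_def by (auto simp: PiE_iff Dom_def)
    ultimately show "F \<in> (\<Union>p\<in>P. Bad p)" by blast
  qed
  have "card \<Omega> \<le> card (\<Union>p\<in>P. Bad p)"
    by (rule card_mono[OF _ cover]) (use finP finDom in \<open>auto simp: Bad_def intro!: finite_PiE\<close>)
  also have "\<dots> \<le> (\<Sum>p\<in>P. card (Bad p))" by (rule card_UN_le[OF finP])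
  also have "\<dots> = (\<Sum>p\<in>P. (40*m^2)^(32*m))" by (rule sum.cong[OF refl cardBad])
  also have "\<dots> = card P * (40*m^2)^(32*m)" by (simp only: sum_constant of_nat_id)
  also have "\<dots> \<le> 2^(16*m) * (40*m^2)^(32*m)" by (rule mult_right_mono[OF cardP]) simp
  also have "\<dots> < (64*m^2)^(32*m)" by (rule num_ineq[OF m])
  finally show False using cardOmega by simp
qed

lemma select_prefix:
  fixes rho :: "nat \<Rightarrow> nat"
  assumes inj: "inj rho" and fin: "finite X"
  shows "k \<le> card X \<Longrightarrow> \<exists>L\<subseteq>X. card L = k \<and> (\<forall>x\<in>L. \<forall>y\<in>X-L. rho x < rho y)"
proof (induction k)
  case 0 then show ?case by (intro exI[of _ "{}"]) auto
next
  case (Suc k)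
  then obtain L where L: "L \<subseteq> X" "card L = k" "\<forall>x\<in>L. \<forall>y\<in>X-L. rho x < rho y" by auto
  have finL: "finite L" using L(1) fin finite_subset by blast
  have "card L < card X" using Suc.prems L by simp
  have "X - L \<noteq> {}"
  proof
    assume "X - L = {}"
    then have "X \<subseteq> L" by blast
    then have "card X \<le> card L" using finL by (rule card_mono[rotated])
    then show False using \<open>card L < card X\<close> by simp
  qed
  then obtain y1 where "y1 \<in> X - L" by blast
  then obtain y0 where y0: "y0 \<in> X - L" and ymin: "\<forall>y. y \<in> X - L \<longrightarrow> rho y0 \<le> rho y"
    using ex_has_least_nat[of "\<lambda>y. y \<in> X - L" y1 rho] by blast
  have "insert y0 L \<subseteq> X" using y0 L(1) by auto
  moreover have "card (insert y0 L) = Suc k" using y0 finL L(2) by simp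
  moreover have "\<forall>x\<in>insert y0 L. \<forall>y\<in>X - insert y0 L. rho x < rho y"
  proof (intro ballI)
    fix x y assume x: "x \<in> insert y0 L" and y: "y \<in> X - insert y0 L"
    show "rho x < rho y"
    proof (cases "x = y0")
      case True
      have "rho y0 \<le> rho y" using ymin y by auto
      moreover have "rho y0 \<noteq> rho y"
      proof
        assume "rho y0 = rho y"
        then have "y0 = y" using injD[OF inj] by blast
        then show False using y by blast
      qed
      ultimately show ?thesis using True by simp
    next
      case False then show ?thesis using x y L(3) by auto
    qed
  qed
  ultimately show ?case by blast
qed

lemma comb:
  assumes g: "good m \<phi>" and S: "S \<subseteq> {..<8*m}" and T: "T \<subseteq> {..<8*m}"
    and cS: "4*m \<le> card S" and cST: "card S \<le> card T"
  shows "m \<le> card {v\<in>T. \<exists>j<8. \<exists>k\<in>S. \<phi> j k = v}"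
proof (rule ccontr)
  define Dd where "Dd = {v\<in>T. \<exists>j<8. \<exists>k\<in>S. \<phi> j k = v}"
  assume "\<not> m \<le> card {v\<in>T. \<exists>j<8. \<exists>k\<in>S. \<phi> j k = v}"
  then have cD: "card Dd < m" unfolding Dd_def by simp
  have finT: "finite T" using T finite_subset by blast
  have DdT: "Dd \<subseteq> T" unfolding Dd_def by auto
  have "card (T - Dd) = card T - card Dd" by (rule card_Diff_subset[OF finite_subset[OF DdT finT] DdT])
  then have cC: "3*m \<le> card (T - Dd)" using cD cS cST by linarith
  obtain A0 where A0: "A0 \<subseteq> S" "card A0 = 4*m" using obtain_subset_with_card_n[OF cS] by blast
  obtain C0 where C0: "C0 \<subseteq> T - Dd" "card C0 = 3*m" using obtain_subset_with_card_n[OF cC] by blast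
  have gg: "\<And>A0 C. A0 \<subseteq> {..<8*m} \<Longrightarrow> card A0 = 4*m \<Longrightarrow> C \<subseteq> {..<8*m} \<Longrightarrow> card C = 3*m
      \<Longrightarrow> (\<exists>j<8. \<exists>k\<in>A0. \<phi> j k \<in> C)" using g unfolding good_def by blast
  have "A0 \<subseteq> {..<8*m}" using A0(1) S by blast
  moreover have "C0 \<subseteq> {..<8*m}" using C0(1) T by blast
  ultimately have "\<exists>j<8. \<exists>k\<in>A0. \<phi> j k \<in> C0" using gg A0(2) C0(2) by blast
  then obtain j k where "j < 8" "k \<in> A0" "\<phi> j k \<in> C0" by blast
  then have "\<phi> j k \<in> Dd" "\<phi> j k \<notin> Dd" using A0 C0 unfolding Dd_def by auto
  then show False by simp
qed

lemma indep_graph: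
  fixes kk :: "nat \<Rightarrow> nat" and \<phi> :: "nat \<Rightarrow> nat \<Rightarrow> nat"
  assumes "finite D"
  shows "\<exists>I\<subseteq>D. card D \<le> 17 * card I \<and> (\<forall>v\<in>I. \<forall>w\<in>I. v \<noteq> w \<longrightarrow> \<not> (\<exists>j<8. \<phi> j (kk v) = w))"
proof -
  have "\<forall>v\<in>D. card {w\<in>D. \<exists>j<8. \<phi> j (kk v) = w} \<le> 8"
  proof
    fix v assume "v \<in> D"
    have "{w\<in>D. \<exists>j<8. \<phi> j (kk v) = w} \<subseteq> (\<lambda>j. \<phi> j (kk v)) ` {..<8}" by auto
    then have "card {w\<in>D. \<exists>j<8. \<phi> j (kk v) = w} \<le> card ((\<lambda>j. \<phi> j (kk v)) ` {..<(8::nat)})"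
      by (rule card_mono[rotated]) simp
    also have "\<dots> \<le> 8" using card_image_le[of "{..<(8::nat)}" "\<lambda>j. \<phi> j (kk v)"] by simp
    finally show "card {w\<in>D. \<exists>j<8. \<phi> j (kk v) = w} \<le> 8" .
  qed
  from indep[OF assms this] show ?thesis by simp
qed

lemma lower:
  assumes m: "m \<ge> 1" and g: "good m \<phi>" and obdd: "is_obdd E"
    and comp0: "computes E (\<lambda>a. \<not> exists_quant (ZS m) (mkD m \<phi>) a)"
  shows "\<exists>c. m \<le> 17 * c \<and> 2 ^ c \<le> bdd_size E"
proof -
  have fr: "frange m \<phi>" using g by (simp add: good_def)
  obtain rho :: "nat \<Rightarrow> nat" where inj: "inj rho" and ord: "ordp E rho"
    using obdd unfolding is_obdd_def ordp_def by blast
  have fin: "finite (bnodes E)" using obdd by (simp add: is_obdd_def)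
  define Edg where "Edg = {(8*m+k, 80*m + \<phi> j k) | k j. k < 8*m \<and> j < 8}"
  define F where "F = (\<lambda>\<alpha>::nat\<Rightarrow>bool. \<forall>(x,y)\<in>Edg. \<alpha> x \<or> \<alpha> y)"
  have Feq: "(\<lambda>a. \<not> exists_quant (ZS m) (mkD m \<phi>) a) = F"
  proof
    fix a
    show "(\<not> exists_quant (ZS m) (mkD m \<phi>) a) = F a"
      unfolding mkD_sem[OF m fr] F_def Edg_def by blast
  qed
  have comp: "computes E F" using comp0 Feq by simp
  define X where "X = {8*m..<16*m} \<union> {80*m..<88*m}"
  have finX: "finite X" by (simp add: X_def)
  have cX: "card X = 16*m"
  proof -
    have "card X = card {8*m..<16*m} + card {80*m..<88*m}" unfolding X_def
      by (rule card_Un_disjoint) auto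
    then show ?thesis by simp
  qed
  obtain L where L: "L \<subseteq> X" "card L = 8*m" and lr0: "\<forall>x\<in>L. \<forall>y\<in>X-L. rho x < rho y"
    using select_prefix[OF inj finX, of "8*m"] cX by auto
  define R where "R = X - L"
  have disj: "L \<inter> R = {}" by (auto simp: R_def)
  have lr: "\<forall>x\<in>L. \<forall>y\<in>R. rho x < rho y" using lr0 by (simp add: R_def)
  have EX: "Edg \<subseteq> (L \<union> R) \<times> (L \<union> R)"
  proof
    fix e assume "e \<in> Edg"
    then obtain k j where e: "e = (8*m+k, 80*m + \<phi> j k)" "k < 8*m" "j < 8" by (auto simp: Edg_def)
    have "\<phi> j k < 8*m" using fr e unfolding frange_def by blast
    then show "e \<in> (L \<union> R) \<times> (L \<union> R)" using e L(1) by (auto simp: R_def X_def)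
  qed
  have noloop: "\<forall>(x,y)\<in>Edg. x \<noteq> y" by (auto simp: Edg_def)
  define A where "A = {k. k < 8*m \<and> 8*m+k \<in> L}"
  define B where "B = {v. v < 8*m \<and> 80*m+v \<in> L}"
  have AN: "A \<subseteq> {..<8*m}" "B \<subseteq> {..<8*m}" by (auto simp: A_def B_def)
  have cAB: "card A + card B = 8*m"
  proof -
    have Leq: "L = (\<lambda>k. 8*m+k) ` A \<union> (\<lambda>v. 80*m+v) ` B"
    proof
      show "L \<subseteq> (\<lambda>k. 8*m+k) ` A \<union> (\<lambda>v. 80*m+v) ` B"
      proof
        fix x assume x: "x \<in> L"
        then have "x \<in> X" using L(1) by blast
        then consider "8*m \<le> x" "x < 16*m" | "80*m \<le> x" "x < 88*m" by (auto simp: X_def)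
        then show "x \<in> (\<lambda>k. 8*m+k) ` A \<union> (\<lambda>v. 80*m+v) ` B"
        proof cases
          case 1
          then have "x - 8*m \<in> A" using x by (auto simp: A_def)
          moreover have "x = 8*m + (x - 8*m)" using 1 by simp
          ultimately show ?thesis by blast
        next
          case 2
          then have "x - 80*m \<in> B" using x by (auto simp: B_def)
          moreover have "x = 80*m + (x - 80*m)" using 2 by simp
          ultimately show ?thesis by blast
        qed
      qed
      show "(\<lambda>k. 8*m+k) ` A \<union> (\<lambda>v. 80*m+v) ` B \<subseteq> L" by (auto simp: A_def B_def)
    qed
    have "card L = card ((\<lambda>k. 8*m+k) ` A) + card ((\<lambda>v. 80*m+v) ` B)"
      unfolding Leq by (rule card_Un_disjoint) (auto simp: A_def B_def)
    also have "\<dots> = card A + card B" by (simp add: card_image inj_on_def)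
    finally show ?thesis using L(2) by simp
  qed
  have finA: "finite A" "finite B" using AN finite_subset by auto
  show ?thesis
  proof (cases "4*m \<le> card A")
    case True
    define T where "T = {..<8*m} - B"
    have cT: "card T = card A" using cAB AN(2) finA by (simp add: T_def card_Diff_subset)
    define D where "D = {v\<in>T. \<exists>j<8. \<exists>k\<in>A. \<phi> j k = v}"
    have mD: "m \<le> card D" unfolding D_def by (rule comb[OF g AN(1) _ True]) (use cT in \<open>auto simp: T_def\<close>)
    define kk where "kk v = (SOME k. k \<in> A \<and> (\<exists>j<8. \<phi> j k = v))" for v
    have kk: "kk v \<in> A \<and> (\<exists>j<8. \<phi> j (kk v) = v)" if "v \<in> D" for v
      unfolding kk_def by (rule someI_ex) (use that in \<open>auto simp: D_def\<close>)
    have finD: "finite D" by (simp add: D_def T_def)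
    obtain I where I: "I \<subseteq> D" "card D \<le> 17 * card I"
      and ind: "\<forall>v\<in>I. \<forall>w\<in>I. v \<noteq> w \<longrightarrow> \<not> (\<exists>j<8. \<phi> j (kk v) = w)"
      using indep_graph[OF finD, of \<phi> kk] by blast
    define p where "p i = 8*m + kk i" for i
    define q where "q i = 80*m + i" for i
    have "2 ^ card I \<le> card (bnodes E) + 2"
    proof (rule fool_graph[OF fin ord comp F_def disj lr _ _ _ EX noloop])
      show "finite I" using I(1) finD finite_subset by blast
      show "p ` I \<subseteq> L" using I(1) kk by (auto simp: p_def A_def)
      show "q ` I \<subseteq> R"
      proof
        fix x assume "x \<in> q ` I"
        then obtain i where i: "i \<in> I" "x = 80*m + i" by (auto simp: q_def)
        then have "i \<in> T" using I(1) by (auto simp: D_def)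
        then show "x \<in> R" using i by (auto simp: T_def B_def R_def X_def)
      qed
      show "\<forall>i\<in>I. (p i, q i) \<in> Edg \<or> (q i, p i) \<in> Edg"
      proof
        fix i assume "i \<in> I"
        then have "kk i \<in> A" "\<exists>j<8. \<phi> j (kk i) = i" using kk I(1) by auto
        then obtain j where "j < 8" "\<phi> j (kk i) = i" "kk i < 8*m" by (auto simp: A_def)
        then have "(p i, q i) \<in> Edg" unfolding Edg_def p_def q_def by force
        then show "(p i, q i) \<in> Edg \<or> (q i, p i) \<in> Edg" by blast
      qed
      have kkA: "\<forall>i\<in>I. kk i < 8*m" using I(1) kk by (auto simp: A_def)
      have "\<not> (x = p l \<and> y = p l')" if e: "(x, y) \<in> Edg" and l: "l \<in> I" and l': "l' \<in> I" for x y l l'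
      proof
        assume xy: "x = p l \<and> y = p l'"
        obtain k j where kj: "y = 80*m + \<phi> j k" using e by (auto simp: Edg_def)
        have "kk l' < 8*m" using kkA l' by blast
        then show False using xy kj unfolding p_def by linarith
      qed
      then show "\<forall>(x,y)\<in>Edg. \<forall>l\<in>I. \<forall>l'\<in>I. \<not> (x = p l \<and> y = p l')" by blast
      show "\<forall>(x,y)\<in>Edg. \<forall>l\<in>I. \<forall>i\<in>I. l \<noteq> i \<longrightarrow> \<not> (x = p l \<and> y = q i) \<and> \<not> (x = q i \<and> y = p l)"
      proof -
        have "\<not> (x = p l \<and> y = q i) \<and> \<not> (x = q i \<and> y = p l)" if e: "(x, y) \<in> Edg" and l: "l \<in> I" and i: "i \<in> I" and ne: "l \<noteq> i" for x y l i
        proof -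
          obtain k j where kj: "x = 8*m+k" "y = 80*m + \<phi> j k" "k < 8*m" "j < 8" using e by (auto simp: Edg_def)
          show "\<not> (x = p l \<and> y = q i) \<and> \<not> (x = q i \<and> y = p l)"
          proof (intro conjI notI)
            assume "x = p l \<and> y = q i"
            then have e1: "k = kk l" "\<phi> j k = i" using kj by (auto simp: p_def q_def)
            have "\<not> (\<exists>j<8. \<phi> j (kk l) = i)" using ind i l ne by blast
            then show False using e1 kj(4) by blast
          next
            assume "x = q i \<and> y = p l"
            then show False using kj by (auto simp: p_def q_def)
          qed
        qed
        then show ?thesis by blast
      qed
    qed
    then show ?thesis using mD I(2) unfolding bdd_size_def by (intro exI[of _ "card I"]) simp
  next
    case False
    define S where "S = {..<8*m} - A"
    have cS: "card S = 8*m - card A" using AN(1) finA by (simp add: S_def card_Diff_subset)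
    have cS4: "4*m \<le> card S" using cS False by simp
    have cSB: "card S \<le> card B" using cS cAB by simp
    define D where "D = {v\<in>B. \<exists>j<8. \<exists>k\<in>S. \<phi> j k = v}"
    have mD: "m \<le> card D" unfolding D_def by (rule comb[OF g _ AN(2) cS4 cSB]) (simp add: S_def)
    define kk where "kk v = (SOME k. k \<in> S \<and> (\<exists>j<8. \<phi> j k = v))" for v
    have kk: "kk v \<in> S \<and> (\<exists>j<8. \<phi> j (kk v) = v)" if "v \<in> D" for v
      unfolding kk_def by (rule someI_ex) (use that in \<open>auto simp: D_def\<close>)
    have finD: "finite D" using finA(2) by (simp add: D_def)
    obtain I where I: "I \<subseteq> D" "card D \<le> 17 * card I"
      and ind: "\<forall>v\<in>I. \<forall>w\<in>I. v \<noteq> w \<longrightarrow> \<not> (\<exists>j<8. \<phi> j (kk v) = w)"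
      using indep_graph[OF finD, of \<phi> kk] by blast
    define p where "p i = 80*m + i" for i
    define q where "q i = 8*m + kk i" for i
    have "2 ^ card I \<le> card (bnodes E) + 2"
    proof (rule fool_graph[OF fin ord comp F_def disj lr _ _ _ EX noloop])
      show "finite I" using I(1) finD finite_subset by blast
      show "p ` I \<subseteq> L"
      proof
        fix x assume "x \<in> p ` I"
        then obtain i where i: "i \<in> I" "x = 80*m + i" by (auto simp: p_def)
        then have "i \<in> B" using I(1) unfolding D_def by blast
        then show "x \<in> L" using i(2) unfolding B_def by blast
      qed
      show "q ` I \<subseteq> R"
      proof
        fix x assume "x \<in> q ` I"
        then obtain i where i: "i \<in> I" "x = 8*m + kk i" by (auto simp: q_def)
        then have "kk i \<in> S" using I(1) kk by blast
        then have "kk i < 8*m" "kk i \<notin> A" unfolding S_def by auto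
        then have "8*m + kk i \<notin> L" "8*m + kk i \<in> X" unfolding A_def X_def by auto
        then show "x \<in> R" using i(2) unfolding R_def by blast
      qed
      show "\<forall>i\<in>I. (p i, q i) \<in> Edg \<or> (q i, p i) \<in> Edg"
      proof
        fix i assume "i \<in> I"
        then have "kk i \<in> S" "\<exists>j<8. \<phi> j (kk i) = i" using kk I(1) by auto
        then obtain j where "j < 8" "\<phi> j (kk i) = i" "kk i < 8*m" by (auto simp: S_def)
        then have "(q i, p i) \<in> Edg" unfolding Edg_def p_def q_def by force
        then show "(p i, q i) \<in> Edg \<or> (q i, p i) \<in> Edg" by blast
      qed
      have "\<not> (x = p l \<and> y = p l')" if e: "(x, y) \<in> Edg" for x y l l'
      proof
        assume xy: "x = p l \<and> y = p l'"
        obtain k j where kj: "x = 8*m + k" "k < 8*m" using e by (auto simp: Edg_def)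
        then show False using xy unfolding p_def by linarith
      qed
      then show "\<forall>(x,y)\<in>Edg. \<forall>l\<in>I. \<forall>l'\<in>I. \<not> (x = p l \<and> y = p l')" by blast
      show "\<forall>(x,y)\<in>Edg. \<forall>l\<in>I. \<forall>i\<in>I. l \<noteq> i \<longrightarrow> \<not> (x = p l \<and> y = q i) \<and> \<not> (x = q i \<and> y = p l)"
      proof -
        have "\<not> (x = p l \<and> y = q i) \<and> \<not> (x = q i \<and> y = p l)" if e: "(x, y) \<in> Edg" and l: "l \<in> I" and i: "i \<in> I" and ne: "l \<noteq> i" for x y l i
        proof -
          obtain k j where kj: "x = 8*m+k" "y = 80*m + \<phi> j k" "k < 8*m" "j < 8" using e by (auto simp: Edg_def)
          show "\<not> (x = p l \<and> y = q i) \<and> \<not> (x = q i \<and> y = p l)"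
          proof (intro conjI notI)
            assume "x = p l \<and> y = q i"
            then show False using kj by (auto simp: p_def q_def)
          next
            assume "x = q i \<and> y = p l"
            then have e1: "k = kk i" "\<phi> j k = l" using kj by (auto simp: p_def q_def)
            have "i \<noteq> l" using ne by simp
            then have "\<not> (\<exists>j<8. \<phi> j (kk i) = l)" using ind i l by blast
            then show False using e1 kj(4) by blast
          qed
        qed
        then show ?thesis by blast
      qed
    qed
    then show ?thesis using mD I(2) unfolding bdd_size_def by (intro exI[of _ "card I"]) simp
  qed
qed

lemma mkD_width: "weak_width (mkD m \<phi>) \<le> 3"
proof -
  let ?S = "{card {v \<in> bnodes (mkD m \<phi>). bvar (mkD m \<phi>) v = x} | x. x \<in> bdd_vars (mkD m \<phi>)} \<union> {0}"
  have fin: "finite ?S" by (simp add: mkD_vars)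
  have le: "y \<le> 3" if y: "y \<in> ?S" for y
  proof (cases "y = 0")
    case False
    then obtain x where yx: "y = card {v \<in> bnodes (mkD m \<phi>). bvar (mkD m \<phi>) v = x}" using y by blast
    have "{v \<in> bnodes (mkD m \<phi>). bvar (mkD m \<phi>) v = x} \<subseteq> {x}" by auto
    then have "card {v \<in> bnodes (mkD m \<phi>). bvar (mkD m \<phi>) v = x} \<le> card {x}" by (rule card_mono[rotated]) simp
    then show ?thesis using yx by simp
  qed simp
  have "Max ?S \<le> 3" using fin le by (subst Max_le_iff) auto
  then show ?thesis unfolding weak_width_def .
qed

theorem lemma4:
  shows "\<exists>(D :: nat \<Rightarrow> bdd) (Z :: nat \<Rightarrow> nat set).
     (\<forall>n. is_obdd (D n) \<and> weak_width (D n) \<le> 3 \<and> Z n \<subseteq> bdd_vars (D n)) \<and>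
     (\<lambda>n. real (card (bdd_vars (D n)))) \<in> O(\<lambda>n. real n) \<and>
     \<not> (\<exists>E :: nat \<Rightarrow> bdd.
          (\<forall>n. is_obdd (E n) \<and> computes (E n) (\<lambda>a. \<not> exists_quant (Z n) (D n) a)) \<and>
          (\<lambda>n. log 2 (real (bdd_size (E n)))) \<in> o(\<lambda>n. real n))"
proof -
  define \<Phi> where "\<Phi> n = (SOME \<phi>. good (Suc n) \<phi>)" for n
  have gd: "good (Suc n) (\<Phi> n)" for n
    unfolding \<Phi>_def by (rule someI_ex[of "good (Suc n)"]) (rule exists_good, simp)
  have fr: "frange (Suc n) (\<Phi> n)" for n using gd[of n] by (simp add: good_def)
  define D where "D n = mkD (Suc n) (\<Phi> n)" for n
  define Z where "Z n = ZS (Suc n)" for n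
  have P1: "\<forall>n. is_obdd (D n) \<and> weak_width (D n) \<le> 3 \<and> Z n \<subseteq> bdd_vars (D n)"
    using mkD_obdd[OF _ fr] mkD_width ZS_sub by (simp add: D_def Z_def)
  have P2: "(\<lambda>n. real (card (bdd_vars (D n)))) \<in> O(\<lambda>n. real n)"
  proof (rule landau_o.bigI[of 176])
    show "eventually (\<lambda>n. norm (real (card (bdd_vars (D n)))) \<le> 176 * norm (real n)) at_top"
    proof (rule eventually_at_top_linorderI[of 1])
      fix n :: nat assume n: "n \<ge> 1"
      have "card (bdd_vars (D n)) = 88 * Suc n" by (simp add: D_def mkD_vars)
      then show "norm (real (card (bdd_vars (D n)))) \<le> 176 * norm (real n)" using n by simp
    qed
  qed simp
  have P3: "\<not> (\<exists>E :: nat \<Rightarrow> bdd.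
          (\<forall>n. is_obdd (E n) \<and> computes (E n) (\<lambda>a. \<not> exists_quant (Z n) (D n) a)) \<and>
          (\<lambda>n. log 2 (real (bdd_size (E n)))) \<in> o(\<lambda>n. real n))"
  proof
    assume "\<exists>E :: nat \<Rightarrow> bdd.
          (\<forall>n. is_obdd (E n) \<and> computes (E n) (\<lambda>a. \<not> exists_quant (Z n) (D n) a)) \<and>
          (\<lambda>n. log 2 (real (bdd_size (E n)))) \<in> o(\<lambda>n. real n)"
    then obtain E where E: "\<forall>n. is_obdd (E n) \<and> computes (E n) (\<lambda>a. \<not> exists_quant (Z n) (D n) a)"
      and so: "(\<lambda>n. log 2 (real (bdd_size (E n)))) \<in> o(\<lambda>n. real n)" by blast
    have lb: "real n / 17 \<le> log 2 (real (bdd_size (E n)))" for n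
    proof -
      obtain c where c: "Suc n \<le> 17 * c" "2 ^ c \<le> bdd_size (E n)"
        using lower[of "Suc n" "\<Phi> n" "E n"] gd[of n] E unfolding D_def Z_def by auto
      have pos: "(0::real) < 2 ^ c" by simp
      have "real c = log 2 (2 ^ c)" by (simp add: log_nat_power)
      also have "\<dots> \<le> log 2 (real (bdd_size (E n)))"
      proof -
        have "real (2^c) \<le> real (bdd_size (E n))" using c(2) by (simp only: of_nat_le_iff)
        then have le: "(2::real)^c \<le> real (bdd_size (E n))" by simp
        have "(0::real) < real (bdd_size (E n))" by (simp add: bdd_size_def)
        then show ?thesis using le pos by (subst log_le_cancel_iff) (auto simp: bdd_size_def)
      qed
      finally have "real c \<le> log 2 (real (bdd_size (E n)))" .
      moreover have "real n / 17 \<le> real c" using c(1) by simp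
      ultimately show ?thesis by linarith
    qed
    have "eventually (\<lambda>n. norm (log 2 (real (bdd_size (E n)))) \<le> (1/34) * norm (real n)) at_top"
      by (rule landau_o.smallD[OF so]) simp
    then obtain N where N: "\<forall>n\<ge>N. norm (log 2 (real (bdd_size (E n)))) \<le> (1/34) * norm (real n)"
      by (auto simp: eventually_at_top_linorder)
    define n where "n = Suc N"
    have "norm (log 2 (real (bdd_size (E n)))) \<le> (1/34) * norm (real n)" using N unfolding n_def by (metis le_SucI order_refl)
    moreover have "real n / 17 \<le> log 2 (real (bdd_size (E n)))" by (rule lb)
    moreover have "real n > 0" by (simp add: n_def)
    ultimately show False by (simp add: abs_if split: if_splits)
  qed
  show ?thesis using P1 P2 P3 by blast
qed

end
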